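(* Let $(X,d)$ and $(\Lambda,\rho)$ be compact metric spaces, let $\omega:\Lambda\times X\to X$ be continuous, and fix a Borel probability measure $p$ on $\Lambda$. Let $$S=\{\sigma\in\Omega:\lim_{n\to\infty}\operatorname{Diam}(\omega_{\sigma_1}\circ\cdots\circ\omega_{\sigma_n}(X))=0\},$$ $$F=\Big\{\sigma\in\Omega:\lim_{n\to\infty}\frac1n\sum_{i=1}^n\operatorname{Diam}(\omega_{\sigma_i}\circ\cdots\circ\omega_{\sigma_1}(X))=0\Big\}.$$ Then $\mathbb{P}(F)=1$ if and only if $\mathbb{P}(S)=1$.
   Context: $\omega_\lambda(x)=\omega(\lambda,x)$. $\Omega=\Lambda^{\mathbb{N}}$ with the product topology and $\mathbb{P}=p^{\mathbb{N}}$ the product measure. $\operatorname{Diam}(A)=\sup\{d(x,y):x,y\in A\}$. *)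

theory Defs
  imports "HOL-Probability.Probability"
begin

text \<open>Forward composition: fwd_comp w s n = w (s 0) o w (s 1) o ... o w (s (n-1))
  (the paper's omega_{sigma_1} o ... o omega_{sigma_n}, with 0-based indices).\<close>
fun fwd_comp :: "('l \<Rightarrow> 'a \<Rightarrow> 'a) \<Rightarrow> (nat \<Rightarrow> 'l) \<Rightarrow> nat \<Rightarrow> 'a \<Rightarrow> 'a" where
  "fwd_comp w s 0 = id"
| "fwd_comp w s (Suc n) = fwd_comp w s n \<circ> w (s n)"

text \<open>Backward composition: bwd_comp w s n = w (s (n-1)) o ... o w (s 0)
  (the paper's omega_{sigma_n} o ... o omega_{sigma_1}).\<close>
fun bwd_comp :: "('l \<Rightarrow> 'a \<Rightarrow> 'a) \<Rightarrow> (nat \<Rightarrow> 'l) \<Rightarrow> nat \<Rightarrow> 'a \<Rightarrow> 'a" where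
  "bwd_comp w s 0 = id"
| "bwd_comp w s (Suc n) = w (s n) \<circ> bwd_comp w s n"

end

theory Submission
  imports Defs
begin


lemma bwd_cong: "(\<forall>i<n. s i = t i) \<Longrightarrow> bwd_comp w s n = bwd_comp w t n"
  by (induction n) auto

lemma fwd_Suc': "fwd_comp w s (Suc n) = w (s 0) \<circ> fwd_comp w (\<lambda>i. s (Suc i)) n"
  by (induction n arbitrary: s) (auto simp: comp_assoc)

lemma fwd_bwd: "fwd_comp w s n = bwd_comp w (\<lambda>i. s (n - Suc i)) n"
proof (induction n arbitrary: s)
  case 0 then show ?case by simp
next
  case (Suc n)
  have "fwd_comp w s (Suc n) = w (s 0) \<circ> bwd_comp w (\<lambda>i. s (Suc (n - Suc i))) n"
    by (simp only: fwd_Suc' Suc)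
  also have "bwd_comp w (\<lambda>i. s (Suc (n - Suc i))) n = bwd_comp w (\<lambda>i. s (Suc n - Suc i)) n"
    by (rule bwd_cong) (auto simp: Suc_diff_Suc)
  finally show ?case by simp
qed

definition rvp :: "nat \<Rightarrow> nat \<Rightarrow> nat" where "rvp n i = (if i < n then n - Suc i else i)"

lemma inj_rvp: "inj (rvp n)"
  unfolding inj_def rvp_def by auto

lemma fwd_bwd_rvp: "fwd_comp w s n = bwd_comp w (s \<circ> rvp n) n"
  unfolding fwd_bwd by (rule bwd_cong) (auto simp: rvp_def)

lemma bwd_shift: "k \<le> i \<Longrightarrow> bwd_comp w s i = bwd_comp w (\<lambda>m. s (m + (i - k))) k \<circ> bwd_comp w s (i - k)"
proof (induction k arbitrary: i)
  case 0 then show ?case by simp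
next
  case (Suc k)
  then obtain j where j: "i = Suc j" "k \<le> j" by (cases i) auto
  have "bwd_comp w s i = w (s j) \<circ> bwd_comp w s j" using j by simp
  also have "\<dots> = w (s j) \<circ> (bwd_comp w (\<lambda>m. s (m + (j - k))) k \<circ> bwd_comp w s (j - k))"
    by (simp only: Suc.IH[OF j(2)])
  also have "\<dots> = bwd_comp w (\<lambda>m. s (m + (i - Suc k))) (Suc k) \<circ> bwd_comp w s (i - Suc k)"
    using j by (simp add: comp_assoc)
  finally show ?case .
qed

lemma diameter_le_metric:
  fixes S :: "'a::metric_space set"
  assumes "0 \<le> d" "\<And>x y. x \<in> S \<Longrightarrow> y \<in> S \<Longrightarrow> dist x y \<le> d"
  shows "diameter S \<le> d"
  using assms by (auto simp: diameter_def intro!: cSUP_least)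


fun apx :: "'a::metric_space list \<Rightarrow> real \<Rightarrow> 'a \<Rightarrow> 'a \<Rightarrow> 'a" where
  "apx [] e d z = d"
| "apx (y # ys) e d z = (if dist z y < e then y else apx ys e d z)"

lemma apx_in: "set ys \<subseteq> S \<Longrightarrow> d \<in> S \<Longrightarrow> apx ys e d z \<in> S"
  by (induction ys) auto

lemma apx_dist: "\<exists>y\<in>set ys. dist y z < e \<Longrightarrow> dist (apx ys e d z) z < e"
  by (induction ys) (auto simp: dist_commute)

lemma apx_meas:
  assumes g: "g \<in> borel_measurable N"
    and H: "\<And>y. y \<in> set ys \<or> y = d \<Longrightarrow> (\<lambda>x. H x y) \<in> measurable N K"
  shows "(\<lambda>x. H x (apx ys e d (g x))) \<in> measurable N K"
  using H
proof (induction ys)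
  case Nil then show ?case by simp
next
  case (Cons y ys)
  have gm: "(\<lambda>x. dist (g x) y) \<in> borel_measurable N"
    by (rule borel_measurable_continuous_on[OF _ g]) (auto intro!: continuous_intros)
  have s: "{x \<in> space N. dist (g x) y < e} \<in> sets N"
    using gm by measurable
  have eq: "(\<lambda>x. H x (apx (y#ys) e d (g x))) = (\<lambda>x. if dist (g x) y < e then H x y else H x (apx ys e d (g x)))"
    by auto
  show ?case unfolding eq
    by (rule measurable_If[OF _ _ s]) (use Cons in auto)
qed

locale setting =
  fixes X :: "'a::metric_space set" and Lam :: "'l::metric_space set"
    and w :: "'l \<Rightarrow> 'a \<Rightarrow> 'a" and p :: "'l measure"
  assumes cX: "compact X" and cL: "compact Lam"
    and cont: "continuous_on (Lam \<times> X) (\<lambda>(l, x). w l x)"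
    and wX: "\<And>l x. l \<in> Lam \<Longrightarrow> x \<in> X \<Longrightarrow> w l x \<in> X"
    and sp: "sets p = sets (restrict_space borel Lam)"
    and pp: "prob_space p"
begin

lemma space_p: "space p = Lam"
  using sets_eq_imp_space_eq[OF sp] by (simp add: space_restrict_space)

lemma w_cont: "l \<in> Lam \<Longrightarrow> continuous_on X (w l)"
  by (rule continuous_on_compose2[OF cont, of X "\<lambda>x. (l, x)", simplified])
     (auto intro!: continuous_intros)

lemma w_cont_l: "x \<in> X \<Longrightarrow> continuous_on Lam (\<lambda>l. w l x)"
  by (rule continuous_on_compose2[OF cont, of Lam "\<lambda>l. (l, x)", simplified])
     (auto intro!: continuous_intros)

lemma bwd_in: "(\<forall>i<n. s i \<in> Lam) \<Longrightarrow> x \<in> X \<Longrightarrow> bwd_comp w s n x \<in> X"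
  by (induction n) (auto intro: wX)

lemma bwd_img: "(\<forall>i<n. s i \<in> Lam) \<Longrightarrow> bwd_comp w s n ` X \<subseteq> X"
  using bwd_in by blast

lemma bwd_cont: "(\<forall>i<n. s i \<in> Lam) \<Longrightarrow> continuous_on X (bwd_comp w s n)"
proof (induction n)
  case 0 then show ?case by (simp add: continuous_on_id)
next
  case (Suc n)
  then have "continuous_on X (bwd_comp w s n)" by simp
  moreover have "continuous_on (bwd_comp w s n ` X) (w (s n))"
    using Suc.prems bwd_img[of n s] by (auto intro: continuous_on_subset[OF w_cont])
  ultimately show ?case using continuous_on_compose[of X "bwd_comp w s n" "w (s n)"] by (simp add: o_def)
qed

lemma bX: "bounded X" using cX by (rule compact_imp_bounded)

definition "Mx = diameter X"

lemma Mx_ge: "0 \<le> Mx" unfolding Mx_def by (rule diameter_ge_0[OF bX])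

lemma bwd_diam: "(\<forall>i<n. s i \<in> Lam) \<Longrightarrow> 0 \<le> diameter (bwd_comp w s n ` X) \<and> diameter (bwd_comp w s n ` X) \<le> Mx"
  unfolding Mx_def using bwd_img[of n s] bX
  by (auto intro: diameter_ge_0 bounded_subset diameter_subset)

lemma fwd_diam_dec: assumes "\<forall>i. s i \<in> Lam"
  shows "diameter (fwd_comp w s (Suc n) ` X) \<le> diameter (fwd_comp w s n ` X)"
proof -
  have sub: "fwd_comp w s (Suc n) ` X \<subseteq> fwd_comp w s n ` X"
    using wX assms by auto
  have "fwd_comp w s n ` X \<subseteq> X"
    using bwd_img[of n "s \<circ> rvp n"] assms by (simp add: fwd_bwd_rvp)
  then show ?thesis using sub bX by (intro diameter_subset) (auto intro: bounded_subset)
qed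

lemma bwd_shift_le: assumes "\<forall>i. s i \<in> Lam" "k \<le> i"
  shows "diameter (bwd_comp w s i ` X) \<le> diameter (bwd_comp w (\<lambda>m. s (m + (i - k))) k ` X)"
proof -
  have "bwd_comp w s i ` X \<subseteq> bwd_comp w (\<lambda>m. s (m + (i - k))) k ` X"
    using bwd_shift[OF assms(2), of w s] bwd_img[of "i-k" s] assms(1) by (auto simp: image_comp[symmetric])
  moreover have "bwd_comp w (\<lambda>m. s (m + (i - k))) k ` X \<subseteq> X"
    using bwd_img assms(1) by auto
  ultimately show ?thesis using bX by (intro diameter_subset) (auto intro: bounded_subset)
qed


definition net :: "nat \<Rightarrow> 'a set" where
  "net k = (SOME F. finite F \<and> F \<subseteq> X \<and> X \<subseteq> (\<Union>y\<in>F. ball y (1 / real (Suc k))))"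

lemma net: "finite (net k) \<and> net k \<subseteq> X \<and> X \<subseteq> (\<Union>y\<in>net k. ball y (1 / real (Suc k)))"
proof -
  have "\<exists>F. finite F \<and> F \<subseteq> X \<and> X \<subseteq> (\<Union>y\<in>F. ball y (1 / real (Suc k)))"
    using seq_compact_imp_totally_bounded[OF compact_imp_seq_compact[OF cX]] by simp
  then show ?thesis unfolding net_def by (rule someI_ex)
qed

definition nl :: "nat \<Rightarrow> 'a list" where "nl k = (SOME ys. set ys = net k)"

lemma set_nl: "set (nl k) = net k"
  unfolding nl_def using net finite_list by (metis (mono_tags, lifting) someI_ex)

definition ap :: "nat \<Rightarrow> 'a \<Rightarrow> 'a" where
  "ap k z = apx (nl k) (1 / real (Suc k)) (SOME x. x \<in> X) z"

lemma d0: "X \<noteq> {} \<Longrightarrow> (SOME x. x \<in> X) \<in> X"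
  by (simp add: some_in_eq)

lemma ap_in: "X \<noteq> {} \<Longrightarrow> ap k z \<in> X"
  unfolding ap_def by (rule apx_in) (use net set_nl d0 in auto)

lemma ap_dist: assumes "z \<in> X" shows "dist (ap k z) z < 1 / real (Suc k)"
proof -
  from net[of k] assms obtain y where "y \<in> net k" "z \<in> ball y (1 / real (Suc k))" by blast
  then show ?thesis unfolding ap_def by (intro apx_dist) (auto simp: set_nl)
qed

lemma ap_lim: assumes "z \<in> X" shows "(\<lambda>k. ap k z) \<longlonglongrightarrow> z"
proof -
  have "(\<lambda>k. dist (ap k z) z) \<longlonglongrightarrow> 0"
  proof (rule tendsto_sandwich[of "\<lambda>_. 0" _ _ "\<lambda>k. 1 / real (Suc k)"])
    show "(\<lambda>k. 1 / real (Suc k)) \<longlonglongrightarrow> 0"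
      using LIMSEQ_inverse_real_of_nat by (simp add: divide_inverse)
    show "\<forall>\<^sub>F n in sequentially. dist (ap n z) z \<le> 1 / real (Suc n)"
      by (intro always_eventually allI less_imp_le ap_dist[OF assms])
  qed auto
  then show ?thesis using tendsto_dist_iff by blast
qed

lemma meas_ap:
  assumes "X \<noteq> {}" "g \<in> borel_measurable N" "\<And>y. y \<in> X \<Longrightarrow> (\<lambda>x. H x y) \<in> measurable N K"
  shows "(\<lambda>x. H x (ap k (g x))) \<in> measurable N K"
  unfolding ap_def
  by (rule apx_meas[OF assms(2)]) (use assms(1,3) net set_nl d0 in auto)

lemma w_meas:
  assumes ne: "X \<noteq> {}" and g: "g \<in> borel_measurable N" and gX: "\<And>x. x \<in> space N \<Longrightarrow> g x \<in> X"
    and l: "l \<in> measurable N p"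
  shows "(\<lambda>x. w (l x) (g x)) \<in> borel_measurable N"
proof (rule borel_measurable_LIMSEQ_metric)
  have l': "l \<in> measurable N (restrict_space borel Lam)"
    using l measurable_cong_sets[OF refl sp, of N] by simp
  show "(\<lambda>x. w (l x) (ap k (g x))) \<in> borel_measurable N" for k
    by (rule meas_ap[OF ne g])
       (rule measurable_compose[OF l' borel_measurable_continuous_on_restrict[OF w_cont_l]])
  fix x assume x: "x \<in> space N"
  have lx: "l x \<in> Lam" using measurable_space[OF l x] space_p by simp
  show "(\<lambda>k. w (l x) (ap k (g x))) \<longlonglongrightarrow> w (l x) (g x)"
    by (rule continuous_on_tendsto_compose[OF w_cont[OF lx] ap_lim[OF gX[OF x]] gX[OF x]])
       (intro always_eventually allI ap_in[OF ne])
qed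

lemma dist_meas:
  assumes ne: "X \<noteq> {}" and f: "f \<in> borel_measurable N" and fX: "\<And>x. x \<in> space N \<Longrightarrow> f x \<in> X"
    and g: "g \<in> borel_measurable N" and gX: "\<And>x. x \<in> space N \<Longrightarrow> g x \<in> X"
  shows "(\<lambda>x. dist (f x) (g x)) \<in> borel_measurable N"
proof (rule borel_measurable_LIMSEQ_real)
  have inner: "(\<lambda>x. dist y (ap k (g x))) \<in> borel_measurable N" for y k
    by (rule meas_ap[OF ne g]) simp
  show "(\<lambda>x. dist (ap k (f x)) (ap k (g x))) \<in> borel_measurable N" for k
    by (rule meas_ap[OF ne f inner])
  fix x assume x: "x \<in> space N"
  show "(\<lambda>k. dist (ap k (f x)) (ap k (g x))) \<longlonglongrightarrow> dist (f x) (g x)"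
    by (intro tendsto_dist ap_lim fX gX x)
qed

lemma pt_meas:
  assumes ne: "X \<noteq> {}" and c: "\<forall>i<n. (\<lambda>x. c x i) \<in> measurable N p" and z: "z \<in> X"
  shows "(\<lambda>x. bwd_comp w (c x) n z) \<in> borel_measurable N \<and> (\<forall>x\<in>space N. bwd_comp w (c x) n z \<in> X)"
  using c
proof (induction n)
  case 0 then show ?case using z by simp
next
  case (Suc n)
  then have IH: "(\<lambda>x. bwd_comp w (c x) n z) \<in> borel_measurable N" "\<forall>x\<in>space N. bwd_comp w (c x) n z \<in> X"
    by auto
  have cn: "(\<lambda>x. c x n) \<in> measurable N p" using Suc.prems by auto
  have "(\<lambda>x. w (c x n) (bwd_comp w (c x) n z)) \<in> borel_measurable N"
    by (rule w_meas[OF ne IH(1) _ cn]) (use IH(2) in auto)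
  moreover have "\<forall>x\<in>space N. w (c x n) (bwd_comp w (c x) n z) \<in> X"
    using IH(2) measurable_space[OF cn] space_p by (auto intro: wX)
  ultimately show ?case by simp
qed

lemma diam_approx:
  assumes ne: "X \<noteq> {}" and f: "continuous_on X f"
  shows "(\<lambda>k. Max ((\<lambda>i. dist (f (fst i)) (f (snd i))) ` (net k \<times> net k))) \<longlonglongrightarrow> diameter (f ` X)"
proof (rule LIMSEQ_I)
  fix r :: real assume r: "0 < r"
  define Mk where "Mk k = Max ((\<lambda>i. dist (f (fst i)) (f (snd i))) ` (net k \<times> net k))" for k
  have bf: "bounded (f ` X)" using compact_continuous_image[OF f cX] by (rule compact_imp_bounded)
  have nne: "net k \<noteq> {}" for k using net[of k] ne by auto
  have fin: "finite (net k \<times> net k)" for k using net by auto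
  have up: "Mk k \<le> diameter (f ` X)" for k
    unfolding Mk_def using fin nne net[of k]
    by (subst Max_le_iff) (auto intro!: diameter_bounded_bound[OF bf])
  have ge: "dist (f a) (f b) \<le> Mk k" if "a \<in> net k" "b \<in> net k" for a b k
    unfolding Mk_def using fin that by (intro Max_ge) force+
  have M0: "0 \<le> Mk k" for k
  proof -
    obtain a where "a \<in> net k" using nne[of k] by blast
    from ge[OF this this] show ?thesis by simp
  qed
  obtain d where d: "d > 0" "\<forall>x\<in>X. \<forall>x'\<in>X. dist x' x < d \<longrightarrow> dist (f x') (f x) < r / 3"
  proof -
    have "r / 3 > 0" using r by simp
    then show ?thesis using that compact_uniformly_continuous[OF f cX] unfolding uniformly_continuous_on_def
      by blast
  qed
  obtain N where N: "inverse (real (Suc N)) < d" using reals_Archimedean[OF d(1)] by blast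
  show "\<exists>no. \<forall>k\<ge>no. norm ((\<lambda>k. Max ((\<lambda>i. dist (f (fst i)) (f (snd i))) ` (net k \<times> net k))) k - diameter (f ` X)) < r"
  proof (intro exI allI impI)
    fix k assume k: "N \<le> k"
    have kd: "1 / real (Suc k) < d"
    proof -
      have "1 / real (Suc k) \<le> inverse (real (Suc N))" using k by (simp add: divide_inverse frac_le)
      then show ?thesis using N by linarith
    qed
    have "diameter (f ` X) \<le> Mk k + 2 * r / 3"
    proof (rule diameter_le_metric)
      show "0 \<le> Mk k + 2 * r / 3" using M0[of k] r by simp
      fix u v assume "u \<in> f ` X" "v \<in> f ` X"
      then obtain x y where xy: "x \<in> X" "y \<in> X" "u = f x" "v = f y" by auto
      obtain a where a: "a \<in> net k" "dist a x < 1 / real (Suc k)" using net[of k] xy(1) by auto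
      obtain b where b: "b \<in> net k" "dist b y < 1 / real (Suc k)" using net[of k] xy(2) by auto
      have aX: "a \<in> X" "b \<in> X" using a b net by auto
      have tri: "dist (f x) (f y) \<le> dist (f x) (f a) + dist (f a) (f b) + dist (f b) (f y)"
        using dist_triangle[of "f x" "f y" "f a"] dist_triangle[of "f a" "f y" "f b"] by linarith
      have "dist x a < d" using a(2) kd dist_commute[of a x] by linarith
      then have 1: "dist (f x) (f a) < r / 3" using d(2) xy(1) aX(1) by blast
      have "dist b y < d" using b(2) kd by linarith
      then have 2: "dist (f b) (f y) < r / 3" using d(2) xy(2) aX(2) by blast
      have 3: "dist (f a) (f b) \<le> Mk k" using ge a b by auto
      show "dist u v \<le> Mk k + 2 * r / 3" using xy tri 1 2 3 by simp
    qed
    then show "norm ((\<lambda>k. Max ((\<lambda>i. dist (f (fst i)) (f (snd i))) ` (net k \<times> net k))) k - diameter (f ` X)) < r"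
      using up[of k] r unfolding Mk_def by simp
  qed
qed

lemma B_meas:
  assumes c: "\<forall>i<n. (\<lambda>x. c x i) \<in> measurable N p"
  shows "(\<lambda>x. diameter (bwd_comp w (c x) n ` X)) \<in> borel_measurable N"
proof (cases "X = {}")
  case True then show ?thesis by simp
next
  case ne: False
  show ?thesis
  proof (rule borel_measurable_LIMSEQ_real)
    fix x assume x: "x \<in> space N"
    have "\<forall>i<n. c x i \<in> Lam" using c measurable_space[OF _ x] space_p by auto
    then show "(\<lambda>k. Max ((\<lambda>i. dist (bwd_comp w (c x) n (fst i)) (bwd_comp w (c x) n (snd i))) ` (net k \<times> net k)))
        \<longlonglongrightarrow> diameter (bwd_comp w (c x) n ` X)"
      by (intro diam_approx[OF ne] bwd_cont)
  next
    fix k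
    have pm: "(\<lambda>x. bwd_comp w (c x) n z) \<in> borel_measurable N \<and> (\<forall>x\<in>space N. bwd_comp w (c x) n z \<in> X)" 
      if "z \<in> X" for z using pt_meas[OF ne c that] .
    show "(\<lambda>x. Max ((\<lambda>i. dist (bwd_comp w (c x) n (fst i)) (bwd_comp w (c x) n (snd i))) ` (net k \<times> net k)))
        \<in> borel_measurable N"
      apply (rule borel_measurable_Max)
      using net[of k] apply simp
      apply (rule dist_meas[OF ne])
      using pm net[of k] by auto
  qed
qed

end



lemma conv0_iff: "(u \<longlonglongrightarrow> (0::real)) \<longleftrightarrow> (\<forall>m::nat. \<exists>N::nat. \<forall>n\<ge>N. \<bar>u n\<bar> < 1 / real (Suc m))"
proof
  assume "u \<longlonglongrightarrow> 0"
  then show "\<forall>m::nat. \<exists>N::nat. \<forall>n\<ge>N. \<bar>u n\<bar> < 1 / real (Suc m)"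
    unfolding LIMSEQ_iff by simp
next
  assume H: "\<forall>m::nat. \<exists>N::nat. \<forall>n\<ge>N. \<bar>u n\<bar> < 1 / real (Suc m)"
  show "u \<longlonglongrightarrow> 0"
  proof (rule LIMSEQ_I)
    fix r :: real assume "0 < r"
    then obtain m where m: "inverse (real (Suc m)) < r" using reals_Archimedean by blast
    from H obtain N where "\<forall>n\<ge>N. \<bar>u n\<bar> < 1 / real (Suc m)" by blast
    then show "\<exists>no. \<forall>n\<ge>no. norm (u n - 0) < r"
      using m by (auto simp: divide_inverse intro: less_trans)
  qed
qed

lemma conv0_meas:
  assumes [measurable]: "\<And>n. u n \<in> borel_measurable M"
  shows "{x\<in>space M. (\<lambda>n. u n x) \<longlonglongrightarrow> (0::real)} \<in> sets M"
  unfolding conv0_iff by measurable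

lemma sum_lessThan_add_nat: "(\<Sum>j<a + b. f j) = (\<Sum>j<a. f j) + (\<Sum>r<b. f (a + r))"
  for f :: "nat \<Rightarrow> real"
  by (induction b) auto

lemma sum_blocks: "(\<Sum>j<N * k. f j) = (\<Sum>r<k. \<Sum>q<N. f (q * k + r))"
  for f :: "nat \<Rightarrow> real"
proof (induction N)
  case 0 then show ?case by simp
next
  case (Suc N)
  have "(\<Sum>j<Suc N * k. f j) = (\<Sum>j<N * k + k. f j)" by (simp add: add.commute)
  also have "\<dots> = (\<Sum>j<N * k. f j) + (\<Sum>r<k. f (N * k + r))" by (rule sum_lessThan_add_nat)
  also have "\<dots> = (\<Sum>r<k. \<Sum>q<Suc N. f (q * k + r))" by (simp add: Suc sum.distrib)
  finally show ?case .
qed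

context setting begin

abbreviation "P \<equiv> PiM UNIV (\<lambda>_::nat. p)"

lemma probP: "prob_space P"
  by (intro prob_space_PiM pp)

sublocale P: prob_space P by (rule probP)

lemma spP: "s \<in> space P \<longleftrightarrow> (\<forall>i. s i \<in> Lam)"
  by (simp add: space_PiM space_p PiE_def Pi_def)

definition B :: "nat \<Rightarrow> (nat \<Rightarrow> 'l) \<Rightarrow> real" where
  "B n s = diameter (bwd_comp w s n ` X)"
definition D :: "nat \<Rightarrow> (nat \<Rightarrow> 'l) \<Rightarrow> real" where
  "D n s = diameter (fwd_comp w s n ` X)"

lemma D_B: "D n s = B n (s \<circ> rvp n)"
  unfolding D_def B_def fwd_bwd_rvp ..

lemma comp_meas: "(\<lambda>s. s \<circ> f) \<in> measurable P P"
proof -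
  have "(\<lambda>s. \<lambda>i\<in>UNIV. s (f i)) \<in> measurable P P"
    by (rule measurable_restrict) simp
  then show ?thesis by (simp add: restrict_UNIV o_def)
qed

lemma reindex: assumes "inj f" shows "distr P P (\<lambda>s. s \<circ> f) = P"
proof -
  have "distr P (PiM UNIV (\<lambda>i. p)) (\<lambda>\<omega>. \<lambda>n\<in>UNIV. \<omega> (f n)) = PiM UNIV (\<lambda>i. p)"
    using distr_PiM_reindex[of UNIV "\<lambda>_. p" f UNIV] pp assms by simp
  then show ?thesis by (simp add: restrict_UNIV o_def)
qed

lemma B_meas_gen: "(\<lambda>s. B n (s \<circ> f)) \<in> borel_measurable P"
  unfolding B_def by (rule B_meas) simp

lemma Bm[measurable]: "B n \<in> borel_measurable P"
  using B_meas_gen[of n id] by simp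

lemma Dm[measurable]: "D n \<in> borel_measurable P"
  unfolding D_B using B_meas_gen .

lemma B_bnd: "s \<in> space P \<Longrightarrow> 0 \<le> B n s \<and> B n s \<le> Mx"
  unfolding B_def using bwd_diam spP by auto

lemma D_bnd: "s \<in> space P \<Longrightarrow> 0 \<le> D n s \<and> D n s \<le> Mx"
  unfolding D_B using B_bnd[of "s \<circ> rvp n" n] spP by auto

lemma int_comp: assumes "inj f" shows "integral\<^sup>L P (\<lambda>s. B n (s \<circ> f)) = integral\<^sup>L P (B n)"
proof -
  have "integral\<^sup>L P (B n) = integral\<^sup>L (distr P P (\<lambda>s. s \<circ> f)) (B n)"
    using reindex[OF assms] by simp
  also have "\<dots> = integral\<^sup>L P (\<lambda>s. B n (s \<circ> f))"
    by (rule integral_distr[OF comp_meas Bm])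
  finally show ?thesis ..
qed

lemma ED: "integral\<^sup>L P (D n) = integral\<^sup>L P (B n)"
  unfolding D_B using int_comp[OF inj_rvp] .

lemma int_bnd: 
  assumes "f \<in> borel_measurable P" "\<And>s. s \<in> space P \<Longrightarrow> 0 \<le> f s \<and> f s \<le> Mx"
  shows "integrable P f"
  by (rule P.integrable_const_bound[where B=Mx]) (use assms in auto)

lemma intB: "integrable P (B n)" by (rule int_bnd) (auto simp: B_bnd)
lemma intD: "integrable P (D n)" by (rule int_bnd) (auto simp: D_bnd)

lemma D_decseq: "s \<in> space P \<Longrightarrow> decseq (\<lambda>n. D n s)"
  by (rule decseq_SucI) (use fwd_diam_dec spP in \<open>auto simp: D_def\<close>)

lemma D_dec: "s \<in> space P \<Longrightarrow> i \<le> n \<Longrightarrow> D n s \<le> D i s"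
  using D_decseq decseqD by blast

lemma ED_dec: "i \<le> n \<Longrightarrow> integral\<^sup>L P (D n) \<le> integral\<^sup>L P (D i)"
  by (rule integral_mono[OF intD intD]) (use D_dec in auto)

lemma ED_nn: "0 \<le> integral\<^sup>L P (D n)"
  by (rule integral_nonneg_AE) (use D_bnd in auto)


definition A :: "nat \<Rightarrow> (nat \<Rightarrow> 'l) \<Rightarrow> real" where
  "A n s = (1 / real n) * (\<Sum>i=1..n. B i s)"

lemma Am[measurable]: "A n \<in> borel_measurable P"
  unfolding A_def by measurable

lemma A_bnd: assumes "s \<in> space P" shows "0 \<le> A n s \<and> A n s \<le> Mx"
proof -
  have "(\<Sum>i=1..n. B i s) \<le> of_nat (card {1..n}) * Mx"
    by (rule sum_bounded_above) (use B_bnd assms in auto)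
  moreover have "0 \<le> (\<Sum>i=1..n. B i s)" by (rule sum_nonneg) (use B_bnd assms in auto)
  ultimately show ?thesis unfolding A_def using Mx_ge
    by (cases "n = 0") (auto simp: field_simps)
qed

lemma EA: "integral\<^sup>L P (A n) = (1 / real n) * (\<Sum>i=1..n. integral\<^sup>L P (B i))"
  unfolding A_def by (simp add: integral_sum intB)

lemma EA_ge: assumes "1 \<le> n" shows "integral\<^sup>L P (D n) \<le> integral\<^sup>L P (A n)"
proof -
  have "(\<Sum>i=1..n. integral\<^sup>L P (D n)) \<le> (\<Sum>i=1..n. integral\<^sup>L P (D i))"
    by (rule sum_mono) (auto intro: ED_dec)
  then have "real n * integral\<^sup>L P (D n) \<le> (\<Sum>i=1..n. integral\<^sup>L P (B i))"
    by (simp add: ED)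
  then show ?thesis unfolding EA using assms by (simp add: field_simps)
qed

lemma dir2:
  assumes ae: "AE s in P. (\<lambda>n. A n s) \<longlonglongrightarrow> 0"
  shows "AE s in P. (\<lambda>n. D n s) \<longlonglongrightarrow> 0"
proof -
  have EA0: "(\<lambda>n. integral\<^sup>L P (A n)) \<longlonglongrightarrow> integral\<^sup>L P (\<lambda>_. 0)"
    by (rule integral_dominated_convergence[where w="\<lambda>_. Mx"]) (use ae A_bnd in auto)
  have ED0: "(\<lambda>n. integral\<^sup>L P (D n)) \<longlonglongrightarrow> 0"
  proof (rule tendsto_sandwich[of "\<lambda>_. 0" _ _ "\<lambda>n. integral\<^sup>L P (A n)"])
    show "\<forall>\<^sub>F n in sequentially. 0 \<le> integral\<^sup>L P (D n)" using ED_nn by simp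
    show "\<forall>\<^sub>F n in sequentially. integral\<^sup>L P (D n) \<le> integral\<^sup>L P (A n)"
      using EA_ge eventually_sequentially by blast
    show "(\<lambda>n. integral\<^sup>L P (A n)) \<longlonglongrightarrow> 0" using EA0 by simp
  qed simp
  define L where "L s = (INF n. D n s)" for s
  have bb: "bdd_below (range (\<lambda>n. D n s))" if "s \<in> space P" for s
    by (rule bdd_belowI[of _ 0]) (use D_bnd[OF that] in auto)
  have lim: "(\<lambda>n. D n s) \<longlonglongrightarrow> L s" if "s \<in> space P" for s
    unfolding L_def by (rule LIMSEQ_decseq_INF[OF bb[OF that] D_decseq[OF that]])
  have Lm: "L \<in> borel_measurable P"
    by (rule borel_measurable_LIMSEQ_real[OF lim Dm])
  have Lle: "L s \<le> D n s" if "s \<in> space P" for s n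
    unfolding L_def by (rule cINF_lower[OF bb[OF that]]) simp
  have Lge: "0 \<le> L s" if "s \<in> space P" for s
    unfolding L_def by (rule cINF_greatest) (use D_bnd[OF that] in auto)
  have intL: "integrable P L"
    by (rule int_bnd[OF Lm]) (use Lle Lge D_bnd order_trans in blast)
  have "integral\<^sup>L P L \<le> 0"
  proof (rule LIMSEQ_le_const[OF ED0])
    show "\<exists>N. \<forall>n\<ge>N. integral\<^sup>L P L \<le> integral\<^sup>L P (D n)"
      using integral_mono[OF intL intD Lle] by blast
  qed
  moreover have "0 \<le> integral\<^sup>L P L" by (rule integral_nonneg_AE) (use Lge in auto)
  ultimately have "integral\<^sup>L P L = 0" by simp
  then have "AE s in P. L s = 0"
    using integral_nonneg_eq_0_iff_AE[OF intL] Lge by auto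
  then show ?thesis
  proof (rule AE_mp)
    show "AE s in P. L s = 0 \<longrightarrow> (\<lambda>n. D n s) \<longlonglongrightarrow> 0"
      by (rule AE_I2) (metis lim)
  qed
qed


lemma coord_indep: "P.indep_vars (\<lambda>_. p) (\<lambda>i s. s i) UNIV"
proof -
  have dc: "distr P p (\<lambda>s. s i) = p" for i
    by (rule distr_PiM_component) (auto simp: pp)
  have rv: "(\<lambda>s. s i) \<in> measurable P p" for i
    using measurable_component_singleton[of i UNIV "\<lambda>_. p"] by simp
  show ?thesis
    by (subst P.indep_vars_iff_distr_eq_PiM[OF _ rv])
       (simp_all add: restrict_UNIV dc)
qed

definition Z :: "nat \<Rightarrow> nat \<Rightarrow> (nat \<Rightarrow> 'l) \<Rightarrow> real" where
  "Z k j s = B k (\<lambda>m. s (m + j))"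

lemma Z_comp: "Z k j s = B k (s \<circ> (\<lambda>m. m + j))"
  unfolding Z_def o_def ..

lemma Zm[measurable]: "Z k j \<in> borel_measurable P"
  unfolding Z_comp by (rule B_meas_gen)

lemma EZ: "integral\<^sup>L P (Z k j) = integral\<^sup>L P (B k)"
  unfolding Z_comp by (rule int_comp) (auto simp: inj_def)

lemma Z_bnd: "s \<in> space P \<Longrightarrow> 0 \<le> Z k j s \<and> Z k j s \<le> Mx"
  unfolding Z_def using B_bnd[of "\<lambda>m. s (m + j)" k] spP by auto

lemma disj_blocks: fixes k r :: nat shows "disjoint_family_on (\<lambda>q. {q * k + r ..< q * k + r + k}) UNIV"
proof -
  have "{q * k + r ..< q * k + r + k} \<inter> {q' * k + r ..< q' * k + r + k} = {}" if "q < q'" for q q'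
  proof -
    have "Suc q * k \<le> q' * k" using that by (intro mult_le_mono1) simp
    then show ?thesis by auto
  qed
  then show ?thesis unfolding disjoint_family_on_def
    by (metis Int_commute linorder_neqE_nat)
qed

lemma Z_indep: "P.indep_vars (\<lambda>_. borel) (\<lambda>q. Z k (q * k + r)) UNIV"
proof -
  define K where "K q = {q * k + r ..< q * k + r + k}" for q
  have ind: "P.indep_vars (\<lambda>q. PiM (K q) (\<lambda>_. p)) (\<lambda>q s. restrict (\<lambda>i. s i) (K q)) UNIV"
    by (rule P.indep_vars_restrict[OF coord_indep]) (auto simp: K_def disj_blocks)
  define g where "g q t = B k (\<lambda>m. t (m + (q * k + r)))" for q and t :: "nat \<Rightarrow> 'l"
  have gm: "g q \<in> borel_measurable (PiM (K q) (\<lambda>_. p))" for q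
    unfolding g_def B_def
    by (rule B_meas) (auto intro!: measurable_component_singleton simp: K_def)
  have "P.indep_vars (\<lambda>_. borel) (\<lambda>q. g q \<circ> (\<lambda>s. restrict (\<lambda>i. s i) (K q))) UNIV"
    by (rule P.indep_vars_compose[OF ind gm])
  moreover have "g q \<circ> (\<lambda>s. restrict (\<lambda>i. s i) (K q)) = Z k (q * k + r)" for q
  proof
    fix s :: "nat \<Rightarrow> 'l"
    show "(g q \<circ> (\<lambda>s. restrict (\<lambda>i. s i) (K q))) s = Z k (q * k + r) s"
      unfolding g_def Z_def B_def o_def
      by (subst bwd_cong[where t="\<lambda>m. s (m + (q * k + r))"]) (auto simp: K_def)
  qed
  ultimately show ?thesis by simp
qed

lemma slln_r:
  assumes e: "0 < e"
  shows "AE s in P. eventually (\<lambda>N. (\<Sum>q<N. Z k (q * k + r) s) < real N * (integral\<^sup>L P (B k) + e)) sequentially"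
proof -
  define \<mu> where "\<mu> = integral\<^sup>L P (B k)"
  define c where "c = (Mx + 1)\<^sup>2"
  have c: "c > 0" unfolding c_def using Mx_ge by simp
  define An where "An N = {s \<in> space P. real N * \<mu> + real N * e \<le> (\<Sum>q<N. Z k (q * k + r) s)}" for N
  have Anm: "An N \<in> sets P" for N unfolding An_def by measurable
  have bnd: "measure P (An N) \<le> exp (- 2 * e\<^sup>2 / c) ^ N" for N
  proof (cases "N = 0")
    case True then show ?thesis by simp
  next
    case False
    interpret H: Hoeffding_ineq P "{..<N}" "\<lambda>q. Z k (q * k + r)" "\<lambda>_. 0" "\<lambda>_. Mx + 1" "real N * \<mu>"
    proof unfold_locales
      show "P.indep_vars (\<lambda>_. borel) (\<lambda>q. Z k (q * k + r)) {..<N}"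
        by (rule P.indep_vars_subset[OF Z_indep]) simp
      show "AE x in P. Z k (q * k + r) x \<in> {0..Mx + 1}" for q
        using Z_bnd[of _ k "q * k + r"] by (intro AE_I2) fastforce
      show "real N * \<mu> \<equiv> \<Sum>q<N. P.expectation (Z k (q * k + r))"
        by (simp add: EZ \<mu>_def)
    qed simp
    have "measure P (An N) \<le> exp (- 2 * (real N * e)\<^sup>2 / (\<Sum>i<N. (Mx + 1 - 0)\<^sup>2))"
      unfolding An_def by (rule H.Hoeffding_ineq_ge) (use e False Mx_ge in \<open>auto intro!: sum_pos\<close>)
    also have "(\<Sum>i<N. (Mx + 1 - 0)\<^sup>2) = real N * c" by (simp add: c_def)
    also have "- 2 * (real N * e)\<^sup>2 / (real N * c) = real N * (- 2 * e\<^sup>2 / c)"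
      using False c by (simp add: power2_eq_square field_simps)
    also have "exp (real N * (- 2 * e\<^sup>2 / c)) = exp (- 2 * e\<^sup>2 / c) ^ N"
      by (rule exp_of_nat_mult)
    finally show ?thesis .
  qed
  have sum: "summable (\<lambda>N. measure P (An N))"
  proof (rule summable_comparison_test'[where N=0])
    show "summable (\<lambda>N. exp (- 2 * e\<^sup>2 / c) ^ N)"
      using e c by (intro summable_geometric) simp
    show "norm (measure P (An N)) \<le> exp (- 2 * e\<^sup>2 / c) ^ N" for N
      using bnd[of N] by simp
  qed
  have "AE s in P. eventually (\<lambda>N. s \<in> space P - An N) sequentially"
    by (rule borel_cantelli_AE1[OF Anm _ sum]) (simp add: P.emeasure_eq_measure)
  then show ?thesis
    by (rule AE_mp) (auto intro!: AE_I2 elim!: eventually_mono simp: An_def \<mu>_def field_simps)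
qed


lemma sumB_bound:
  assumes s: "s \<in> space P" and k: "1 \<le> k"
  shows "(\<Sum>i=1..n. B i s) \<le> real k * Mx + (\<Sum>j<n. Z k j s)"
proof -
  have "(\<Sum>i=1..n. B i s) \<le> (\<Sum>i=1..n. if i < k then Mx else Z k (i - k) s)"
  proof (rule sum_mono)
    fix i assume "i \<in> {1..n}"
    show "B i s \<le> (if i < k then Mx else Z k (i - k) s)"
    proof (cases "i < k")
      case True then show ?thesis using B_bnd[OF s] by simp
    next
      case False
      then have "B i s \<le> Z k (i - k) s"
        unfolding B_def Z_def using bwd_shift_le[of s k i] s spP by simp
      then show ?thesis using False by simp
    qed
  qed
  also have "\<dots> = (\<Sum>i\<in>{1..n} \<inter> {i. i < k}. Mx) + (\<Sum>i\<in>{1..n} \<inter> - {i. i < k}. Z k (i - k) s)"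
    by (rule sum.If_cases) simp
  also have "(\<Sum>i\<in>{1..n} \<inter> {i. i < k}. Mx) \<le> real k * Mx"
  proof -
    have "card ({1..n} \<inter> {i. i < k}) \<le> card {..<k}"
      by (rule card_mono) auto
    then show ?thesis using Mx_ge by (simp add: mult_right_mono)
  qed
  also have "(\<Sum>i\<in>{1..n} \<inter> - {i. i < k}. Z k (i - k) s) \<le> (\<Sum>j<n. Z k j s)"
  proof -
    have inj: "inj_on (\<lambda>i. i - k) ({1..n} \<inter> - {i. i < k})" by (auto simp: inj_on_def)
    have "(\<Sum>i\<in>{1..n} \<inter> - {i. i < k}. Z k (i - k) s) = (\<Sum>j\<in>(\<lambda>i. i - k) ` ({1..n} \<inter> - {i. i < k}). Z k j s)"
      by (subst sum.reindex[OF inj]) simp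
    also have "\<dots> \<le> (\<Sum>j<n. Z k j s)"
      by (rule sum_mono2) (use k Z_bnd[OF s] in auto)
    finally show ?thesis .
  qed
  finally show ?thesis by simp
qed

lemma dir1:
  assumes ae: "AE s in P. (\<lambda>n. D n s) \<longlonglongrightarrow> 0"
  shows "AE s in P. (\<lambda>n. A n s) \<longlonglongrightarrow> 0"
proof -
  have ED0': "(\<lambda>n. integral\<^sup>L P (D n)) \<longlonglongrightarrow> integral\<^sup>L P (\<lambda>_. 0)"
    by (rule integral_dominated_convergence[where w="\<lambda>_. Mx"]) (use ae D_bnd in auto)
  then have ED0: "(\<lambda>n. integral\<^sup>L P (D n)) \<longlonglongrightarrow> 0" by simp
  have "AE s in P. \<exists>N. \<forall>n\<ge>N. \<bar>A n s\<bar> < 1 / real (Suc m)" for m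
  proof -
    define \<epsilon> where "\<epsilon> = 1 / real (Suc m)"
    have \<epsilon>: "0 < \<epsilon>" unfolding \<epsilon>_def by simp
    obtain k0 where k0: "\<forall>n\<ge>k0. norm (integral\<^sup>L P (D n) - 0) < \<epsilon> / 4"
      using ED0 \<epsilon> unfolding LIMSEQ_iff by (meson zero_less_divide_iff zero_less_numeral)
    define k where "k = Suc k0"
    have k: "1 \<le> k" unfolding k_def by simp
    define \<mu> where "\<mu> = integral\<^sup>L P (B k)"
    define e where "e = \<epsilon> / 4"
    have e: "0 < e" using \<epsilon> unfolding e_def by simp
    have \<mu>: "0 \<le> \<mu>" "\<mu> < \<epsilon> / 4"
      using k0[rule_format, of k] ED_nn[of k] unfolding \<mu>_def ED[symmetric] k_def by auto
    have "AE s in P. \<forall>r\<in>{..<k}. eventually (\<lambda>N. (\<Sum>q<N. Z k (q * k + r) s) < real N * (\<mu> + e)) sequentially"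
      by (rule AE_finite_allI) (use slln_r[OF e] in \<open>auto simp: \<mu>_def\<close>)
    then show ?thesis
    proof (rule AE_mp, intro AE_I2 impI)
      fix s assume s: "s \<in> space P"
        and H: "\<forall>r\<in>{..<k}. eventually (\<lambda>N. (\<Sum>q<N. Z k (q * k + r) s) < real N * (\<mu> + e)) sequentially"
      have "eventually (\<lambda>N. \<forall>r\<in>{..<k}. (\<Sum>q<N. Z k (q * k + r) s) < real N * (\<mu> + e)) sequentially"
        using H by (intro eventually_ball_finite) auto
      then obtain N0 where N0: "\<And>N r. N0 \<le> N \<Longrightarrow> r < k \<Longrightarrow> (\<Sum>q<N. Z k (q * k + r) s) < real N * (\<mu> + e)"
        unfolding eventually_sequentially by blast
      define C where "C = real k * Mx + real k * (\<mu> + e)"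
      have C: "0 \<le> C" unfolding C_def using Mx_ge \<mu> e by simp
      obtain n1 where n1: "2 * C / \<epsilon> < real n1" using reals_Archimedean2 by blast
      show "\<exists>N. \<forall>n\<ge>N. \<bar>A n s\<bar> < 1 / real (Suc m)"
      proof (intro exI allI impI)
        fix n assume n: "max (N0 * k) (max n1 1) \<le> n"
        define N where "N = n div k + 1"
        have "N0 * k div k \<le> n div k" using n by (intro div_le_mono) simp
        then have NN0: "N0 \<le> N" using k unfolding N_def by simp
        have nk: "n \<le> N * k"
        proof -
          have e1: "n div k * k + n mod k = n" by (rule div_mult_mod_eq)
          have e2: "n mod k < k" using k by simp
          show ?thesis using e1 e2 unfolding N_def distrib_right mult_1_left by linarith
        qed
        have Nk: "real (N * k) \<le> real n + real k"
        proof -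
          have h: "n div k * k \<le> n" by (simp add: div_times_less_eq_dividend)
          have h2: "N * k \<le> n + k" using h unfolding N_def distrib_right mult_1_left by linarith
          have "real (N * k) \<le> real (n + k)" using h2 by (simp only: of_nat_le_iff)
          then show ?thesis by simp
        qed
        have Z0: "0 \<le> Z k j s" for j using Z_bnd[OF s] by simp
        have "(\<Sum>j<n. Z k j s) \<le> (\<Sum>j<N * k. Z k j s)"
          by (rule sum_mono2) (use nk Z0 in auto)
        also have "\<dots> = (\<Sum>r<k. \<Sum>q<N. Z k (q * k + r) s)" by (rule sum_blocks)
        also have "\<dots> \<le> (\<Sum>r<k. real N * (\<mu> + e))"
          by (rule sum_mono) (use N0[OF NN0] in \<open>auto intro: less_imp_le\<close>)
        also have "\<dots> = real (N * k) * (\<mu> + e)" by simp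
        also have "\<dots> \<le> (real n + real k) * (\<mu> + e)"
          by (rule mult_right_mono[OF Nk]) (use \<mu> e in simp)
        finally have sZ: "(\<Sum>j<n. Z k j s) \<le> (real n + real k) * (\<mu> + e)" .
        have sB: "(\<Sum>i=1..n. B i s) \<le> real n * (\<mu> + e) + C"
          using sumB_bound[OF s k, of n] sZ unfolding C_def by (simp add: algebra_simps)
        have npos: "0 < real n" using n by simp
        have "A n s \<le> (\<mu> + e) + C / real n"
          unfolding A_def using sB npos by (simp add: field_simps)
        also have "C / real n < \<epsilon> / 2"
        proof -
          have "2 * C / \<epsilon> < real n" using n1 n by linarith
          then have "2 * C < \<epsilon> * real n" using \<epsilon> by (simp add: field_simps)
          then show ?thesis using npos by (simp add: field_simps)
        qed
        finally have "A n s < \<epsilon>" using \<mu> unfolding e_def by linarith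
        moreover have "0 \<le> A n s" using A_bnd[OF s] by simp
        ultimately show "\<bar>A n s\<bar> < 1 / real (Suc m)" unfolding \<epsilon>_def by simp
      qed
    qed
  qed
  then have "AE s in P. \<forall>m. \<exists>N. \<forall>n\<ge>N. \<bar>A n s\<bar> < 1 / real (Suc m)"
    by (simp add: AE_all_countable)
  then show ?thesis by (simp add: conv0_iff)
qed


lemma AE_set: "(AE x in P. x \<in> {s\<in>space P. Q s}) \<longleftrightarrow> (AE x in P. Q x)"
  by (rule AE_cong) simp

lemma main: "measure P {s\<in>space P. (\<lambda>n. A n s) \<longlonglongrightarrow> 0} = 1 \<longleftrightarrow> measure P {s\<in>space P. (\<lambda>n. D n s) \<longlonglongrightarrow> 0} = 1"
proof -
  have m1: "{s\<in>space P. (\<lambda>n. A n s) \<longlonglongrightarrow> 0} \<in> sets P" by (rule conv0_meas) simp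
  have m2: "{s\<in>space P. (\<lambda>n. D n s) \<longlonglongrightarrow> 0} \<in> sets P" by (rule conv0_meas) simp
  show ?thesis unfolding P.prob_eq_1[OF m1] P.prob_eq_1[OF m2] AE_set
    by (rule iffI) (erule dir2, erule dir1)
qed

end

theorem lemma2:
  fixes X :: "'a::metric_space set" and Lam :: "'l::metric_space set"
    and w :: "'l \<Rightarrow> 'a \<Rightarrow> 'a" and p :: "'l measure"
  assumes "compact X" and "compact Lam"
    and "continuous_on (Lam \<times> X) (\<lambda>(l, x). w l x)"
    and "\<And>l x. l \<in> Lam \<Longrightarrow> x \<in> X \<Longrightarrow> w l x \<in> X"
    and "sets p = sets (restrict_space borel Lam)"
    and "prob_space p"
  shows "measure (PiM UNIV (\<lambda>_. p))
           {s \<in> space (PiM UNIV (\<lambda>_. p)).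
              (\<lambda>n. (1 / real n) * (\<Sum>i=1..n. diameter (bwd_comp w s i ` X))) \<longlonglongrightarrow> 0} = 1
     \<longleftrightarrow> measure (PiM UNIV (\<lambda>_. p))
           {s \<in> space (PiM UNIV (\<lambda>_. p)).
              (\<lambda>n. diameter (fwd_comp w s n ` X)) \<longlonglongrightarrow> 0} = 1"
proof -
  interpret S: setting X Lam w p
    by (rule setting.intro) (fact assms)+
  show ?thesis using S.main unfolding S.A_def S.B_def S.D_def .
qed

end
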